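(* Let $(p_m)$ and $(q_n)$ belong to $SVA_{reg(\alpha)}$ (for some $\alpha\ge0$), and let $(u_{mn})$ be a double sequence of complex numbers that is $(\overline{N},p,q)$ summable to a number $\ell$. If $(u_{mn})$ is slowly oscillating relative to $(P_m)$, slowly oscillating relative to $(Q_n)$, and slowly oscillating relative to $(P_m)$ or relative to $(Q_n)$ in the strong sense, then $(u_{mn})$ is $P$-convergent to $\ell$.
   Context: Weights: $(p_m)_{m\ge0},(q_n)_{n\ge0}$ are sequences of positive reals with $P_m=\sum_{i=0}^m p_i\to\infty$ and $Q_n=\sum_{j=0}^n q_j\to\infty$. $SVA_{reg(\alpha)}$ denotes the set of positive sequences $(p_m)$ whose partial sums have the form $P_m=(m+1)^{\alpha}L(m)$ ($m\ge0$) with a constant $\alpha\ge0$ and a slowly varying function $L$ on $(0,\infty)$, i.e. $L$ positive, measurable, and $L(\lambda t)/L(t)\to1$ as $t\to\infty$ for every $\lambda>0$. The weighted means are $\sigma_{mn}=\frac{1}{P_mQ_n}\sum_{i=0}^m\sum_{j=0}^n p_iq_ju_{ij}$; $(u_{mn})$ is $(\overline{N},p,q)$ summable to $\ell$ if $(\sigma_{mn})$ is $P$-convergent to $\ell$. A double sequence $(a_{mn})$ is $P$-convergent to $\ell$ if for every $\epsilon>0$ there is $n_0$ with $|a_{mn}-\ell|<\epsilon$ whenever $m,n\ge n_0$. For a real double array $(a_{mn})$, $\limsup_{m,n\to\infty}a_{mn}=\lim_{N\to\infty}\sup_{m,n\ge N}a_{mn}$. In the maxima below, $i,j$ range over nonnegative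 integers satisfying the constraints. A complex double sequence $(u_{mn})$ is: - slowly oscillating relative to $(P_m)$ if $\lim_{\lambda\to1^+}\limsup_{m,n\to\infty}\max_{P_m\le P_i\le\lambda P_m}|u_{in}-u_{mn}|=0$; - slowly oscillating relative to $(Q_n)$ if $\lim_{\kappa\to1^+}\limsup_{m,n\to\infty}\max_{Q_n\le Q_j\le\kappa Q_n}|u_{mj}-u_{mn}|=0$; - slowly oscillating relative to $(P_m)$ in the strong sense if $\lim_{\lambda,\kappa\to1^+}\limsup_{m,n\to\infty}\max_{P_m\le P_i\le\lambda P_m,\ Q_n\le Q_j\le\kappa Q_n}|u_{ij}-u_{mj}|=0$; - slowly oscillating relative to $(Q_n)$ in the strong sense if $\lim_{\lambda,\kappa\to1^+}\limsup_{m,n\to\infty}\max_{P_m\le P_i\le\lambda P_m,\ Q_n\le Q_j\le\kappa Q_n}|u_{ij}-u_{in}|=0$. *)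

theory Defs
  imports "HOL-Analysis.Analysis"
begin

definition psum :: "(nat \<Rightarrow> real) \<Rightarrow> nat \<Rightarrow> real" where
  "psum p m = (\<Sum>i\<le>m. p i)"

definition slowly_varying :: "(real \<Rightarrow> real) \<Rightarrow> bool" where
  "slowly_varying L \<longleftrightarrow>
     (\<forall>t>0. L t > 0) \<and> set_borel_measurable borel {0<..} L \<and>
     (\<forall>lam>0. ((\<lambda>t. L (lam * t) / L t) \<longlongrightarrow> 1) at_top)"

definition SVA_reg :: "real \<Rightarrow> (nat \<Rightarrow> real) set" where
  "SVA_reg alpha = {p. (\<forall>m. p m > 0) \<and>
     (\<exists>L. slowly_varying L \<and> (\<forall>m. psum p m = (real m + 1) powr alpha * L (real m)))}"

definition wmean :: "(nat \<Rightarrow> real) \<Rightarrow> (nat \<Rightarrow> real) \<Rightarrow> (nat \<Rightarrow> nat \<Rightarrow> complex) \<Rightarrow> nat \<Rightarrow> nat \<Rightarrow> complex" where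
  "wmean p q u m n = (\<Sum>i\<le>m. \<Sum>j\<le>n. of_real (p i * q j) * u i j) / of_real (psum p m * psum q n)"

definition P_conv :: "(nat \<Rightarrow> nat \<Rightarrow> complex) \<Rightarrow> complex \<Rightarrow> bool" where
  "P_conv a l \<longleftrightarrow> (\<forall>\<epsilon>>0. \<exists>n0. \<forall>m n. m \<ge> n0 \<and> n \<ge> n0 \<longrightarrow> cmod (a m n - l) < \<epsilon>)"

definition Nbar_summable :: "(nat \<Rightarrow> real) \<Rightarrow> (nat \<Rightarrow> real) \<Rightarrow> (nat \<Rightarrow> nat \<Rightarrow> complex) \<Rightarrow> complex \<Rightarrow> bool" where
  "Nbar_summable p q u l \<longleftrightarrow> P_conv (wmean p q u) l"

text \<open>limsup of a real double array: lim_N sup_{m,n >= N} a m n, in the extended reals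
  (the sup is decreasing in N, so the limit is the infimum).\<close>
definition dlimsup :: "(nat \<Rightarrow> nat \<Rightarrow> ereal) \<Rightarrow> ereal" where
  "dlimsup a = (INF N. SUP mn \<in> {mn. fst mn \<ge> N \<and> snd mn \<ge> N}. a (fst mn) (snd mn))"

definition slow_osc_P :: "(nat \<Rightarrow> real) \<Rightarrow> (nat \<Rightarrow> nat \<Rightarrow> complex) \<Rightarrow> bool" where
  "slow_osc_P p u \<longleftrightarrow>
     ((\<lambda>lam. dlimsup (\<lambda>m n. SUP i \<in> {i. psum p m \<le> psum p i \<and> psum p i \<le> lam * psum p m}.
          ereal (cmod (u i n - u m n)))) \<longlongrightarrow> 0) (at_right 1)"

definition slow_osc_Q :: "(nat \<Rightarrow> real) \<Rightarrow> (nat \<Rightarrow> nat \<Rightarrow> complex) \<Rightarrow> bool" where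
  "slow_osc_Q q u \<longleftrightarrow>
     ((\<lambda>kap. dlimsup (\<lambda>m n. SUP j \<in> {j. psum q n \<le> psum q j \<and> psum q j \<le> kap * psum q n}.
          ereal (cmod (u m j - u m n)))) \<longlongrightarrow> 0) (at_right 1)"

definition slow_osc_P_strong :: "(nat \<Rightarrow> real) \<Rightarrow> (nat \<Rightarrow> real) \<Rightarrow> (nat \<Rightarrow> nat \<Rightarrow> complex) \<Rightarrow> bool" where
  "slow_osc_P_strong p q u \<longleftrightarrow>
     ((\<lambda>(lam, kap). dlimsup (\<lambda>m n. SUP ij \<in> {(i, j). psum p m \<le> psum p i \<and> psum p i \<le> lam * psum p m
            \<and> psum q n \<le> psum q j \<and> psum q j \<le> kap * psum q n}.
          ereal (cmod (u (fst ij) (snd ij) - u m (snd ij))))) \<longlongrightarrow> 0) (at_right 1 \<times>\<^sub>F at_right 1)"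

definition slow_osc_Q_strong :: "(nat \<Rightarrow> real) \<Rightarrow> (nat \<Rightarrow> real) \<Rightarrow> (nat \<Rightarrow> nat \<Rightarrow> complex) \<Rightarrow> bool" where
  "slow_osc_Q_strong p q u \<longleftrightarrow>
     ((\<lambda>(lam, kap). dlimsup (\<lambda>m n. SUP ij \<in> {(i, j). psum p m \<le> psum p i \<and> psum p i \<le> lam * psum p m
            \<and> psum q n \<le> psum q j \<and> psum q j \<le> kap * psum q n}.
          ereal (cmod (u (fst ij) (snd ij) - u (fst ij) n)))) \<longlongrightarrow> 0) (at_right 1 \<times>\<^sub>F at_right 1)"

end

theory Submission
  imports Defs
begin

lemma psum_Suc: "psum p (Suc m) = psum p m + p (Suc m)"
  by (simp add: psum_def)

lemma psum_pos: "(\<forall>i. p i > 0) \<Longrightarrow> psum p m > 0"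
  unfolding psum_def by (intro sum_pos) auto

lemma psum_mono: assumes "\<forall>i. p i > 0" "i \<le> j" shows "psum p i \<le> psum p j"
  unfolding psum_def using assms by (intro sum_mono2) (auto intro: less_imp_le)

lemma psum_less_imp: assumes "\<forall>i. p i > 0" "psum p i < psum p j" shows "i < j"
  using psum_mono[OF assms(1), of j i] assms(2) by (cases "i < j") auto

lemma ratio_eventually:
  assumes "p \<in> SVA_reg alpha" "alpha \<ge> 0" "delta > 0"
  shows "\<exists>M. \<forall>m\<ge>M. psum p (Suc m) \<le> (1+delta) * psum p m"
proof -
  obtain L where pos: "\<forall>m. p m > 0" and sv: "slowly_varying L"
    and PL: "\<forall>m. psum p m = (real m + 1) powr alpha * L (real m)"
    using assms(1) unfolding SVA_reg_def by auto
  define d where "d = min delta 1"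
  have d: "d > 0" "d \<le> 1" "d \<le> delta" using assms(3) by (auto simp: d_def)
  have "(\<lambda>b::nat. (of_nat (Suc b) / of_nat b :: real)) \<longlonglongrightarrow> 1"
    by (rule LIMSEQ_Suc_n_over_n)
  hence "(\<lambda>b::nat. (of_nat (Suc b) / of_nat b :: real) powr alpha) \<longlonglongrightarrow> 1 powr alpha"
    by (intro tendsto_powr tendsto_const) auto
  hence "\<forall>\<^sub>F b in sequentially. (of_nat (Suc b) / of_nat b :: real) powr alpha < 1 + d/3"
    using d by (intro order_tendstoD(2)) auto
  then obtain b0 where b0: "\<And>b. b \<ge> b0 \<Longrightarrow> (of_nat (Suc b) / of_nat b :: real) powr alpha < 1 + d/3"
    unfolding eventually_sequentially by blast
  define b where "b = Suc b0"
  have b1: "b \<ge> 1" by (simp add: b_def)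
  define lam where "lam = (real b + 1) / real b"
  have lam_pow: "lam powr alpha < 1 + d/3" using b0[of b] by (simp add: b_def lam_def)
  have lam1: "lam \<ge> 1" using b1 by (simp add: lam_def field_simps)
  have svl: "((\<lambda>t. L (lam * t) / L t) \<longlongrightarrow> 1) at_top"
    using sv lam1 unfolding slowly_varying_def by auto
  have hx: "real x \<le> real (b*x)" for x
  proof -
    have "x \<le> b*x" using b1 by (cases b) auto
    thus ?thesis by linarith
  qed
  have fl: "filterlim (\<lambda>k::nat. real (b*k)) at_top sequentially"
    by (rule filterlim_at_top_mono[OF filterlim_real_sequentially]) (use hx in \<open>auto intro!: always_eventually\<close>)
  have "((\<lambda>k. L (lam * real (b*k)) / L (real (b*k))) \<longlongrightarrow> 1) sequentially"
    by (rule filterlim_compose[OF svl fl])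
  hence "\<forall>\<^sub>F k in sequentially. L (lam * real (b*k)) / L (real (b*k)) < 1 + d/3"
    using d by (intro order_tendstoD(2)) auto
  then obtain K where K: "\<And>k. k \<ge> K \<Longrightarrow> L (lam * real (b*k)) / L (real (b*k)) < 1 + d/3"
    unfolding eventually_sequentially by blast
  have key: "psum p ((b+1)*k) \<le> (1+delta) * psum p (b*k)" if k: "k \<ge> K" "k \<ge> 1" for k
  proof -
    define t where "t = real (b*k)"
    have t: "t > 0" using k b1 by (simp add: t_def)
    have Lt: "L t > 0" "L (lam*t) > 0" using sv t lam1 unfolding slowly_varying_def by auto
    have e1: "real ((b+1)*k) = lam * t" using b1 by (simp add: lam_def t_def field_simps)
    have e2: "real ((b+1)*k) + 1 \<le> lam * (t + 1)" 
    proof -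
      have "lam * (t+1) = lam*t + lam" by (simp add: algebra_simps)
      thus ?thesis using e1 lam1 by linarith
    qed
    have "psum p ((b+1)*k) = (real ((b+1)*k) + 1) powr alpha * L (lam*t)"
      using PL e1 by metis
    also have "\<dots> \<le> (lam * (t+1)) powr alpha * L (lam*t)"
      using e2 Lt assms(2) by (intro mult_right_mono powr_mono2) auto
    also have "\<dots> = lam powr alpha * ((t+1) powr alpha * L t) * (L (lam*t) / L t)"
      using Lt lam1 t by (simp add: powr_mult)
    also have "(t+1) powr alpha * L t = psum p (b*k)" using PL by (simp add: t_def)
    also have "lam powr alpha * psum p (b*k) * (L (lam*t) / L t) \<le> (1+d/3) * psum p (b*k) * (1+d/3)"
      using lam_pow K[OF k(1)] psum_pos[OF pos, of "b*k"] Lt d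
      by (intro mult_mono) (auto simp: t_def intro: less_imp_le)
    also have "\<dots> \<le> (1+delta) * psum p (b*k)"
    proof -
      have "(1+d/3)*(1+d/3) \<le> 1 + delta" 
      proof -
        have "d*d \<le> 1*d" using d by (intro mult_right_mono) auto
        moreover have "(1+d/3)*(1+d/3) = 1 + 2*d/3 + d*d/9" by (simp add: algebra_simps)
        ultimately show ?thesis using d by linarith
      qed
      thus ?thesis using psum_pos[OF pos, of "b*k"]
        by (metis mult.assoc mult.commute mult_left_mono less_imp_le)
    qed
    finally show ?thesis .
  qed
  show ?thesis
  proof (intro exI allI impI)
    fix m assume m: "m \<ge> b*b + b*(K+1)"
    define k where "k = m div b"
    have "b*b + b*(K+1) \<le> m" using m .
    have kb: "b*k \<le> m" by (simp add: k_def)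
    have "(b*b + b*(K+1)) div b \<le> m div b" by (rule div_le_mono[OF m])
    hence kge: "k \<ge> b + K + 1" using b1 by (simp add: k_def algebra_simps)
    have "m = b*k + m mod b" by (simp add: k_def)
    moreover have "m mod b < b" using b1 by simp
    ultimately have m1: "Suc m \<le> (b+1)*k" using kge by (simp add: algebra_simps)
    have "psum p (Suc m) \<le> psum p ((b+1)*k)" by (rule psum_mono[OF pos m1])
    also have "\<dots> \<le> (1+delta) * psum p (b*k)" using key kge by auto
    also have "\<dots> \<le> (1+delta) * psum p m"
      using psum_mono[OF pos kb] assms(3) by (intro mult_left_mono) auto
    finally show "psum p (Suc m) \<le> (1+delta) * psum p m" .
  qed
qed


lemma block:
  assumes "p \<in> SVA_reg alpha" "alpha \<ge> 0" "filterlim (psum p) at_top sequentially" "lam > 1"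
  shows "\<exists>M. \<forall>m\<ge>M. \<exists>a. (1+lam)/2 * psum p m \<le> psum p a \<and> psum p a \<le> lam * psum p m"
proof -
  have pos: "\<forall>i. p i > 0" using assms(1) unfolding SVA_reg_def by auto
  define delta where "delta = (lam-1)/(lam+1)"
  have dpos: "delta > 0" using assms(4) by (simp add: delta_def)
  obtain M where M: "\<And>m. m \<ge> M \<Longrightarrow> psum p (Suc m) \<le> (1+delta) * psum p m"
    using ratio_eventually[OF assms(1,2) dpos] by blast
  show ?thesis
  proof (rule exI[of _ M], intro allI impI)
    fix m assume m: "m \<ge> M"
    have Pm: "psum p m > 0" by (rule psum_pos[OF pos])
    have "\<forall>\<^sub>F i in sequentially. psum p i > lam * psum p m"
      using assms(3) by (simp add: filterlim_at_top_dense)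
    then obtain i where i: "psum p i > lam * psum p m"
      by (meson eventually_sequentially order_refl)
    define a' where "a' = (LEAST i. psum p i > lam * psum p m)"
    have a'1: "psum p a' > lam * psum p m" unfolding a'_def by (rule LeastI[of _ i]) (rule i)
    have "m < a'"
    proof (rule ccontr)
      assume "\<not> m < a'"
      hence "psum p a' \<le> psum p m" by (intro psum_mono[OF pos]) auto
      moreover have "psum p m \<le> lam * psum p m" using Pm assms(4) by simp
      ultimately show False using a'1 by linarith
    qed
    then obtain a where a: "a' = Suc a" "m \<le> a" by (cases a') auto
    have "\<not> psum p a > lam * psum p m"
      using not_less_Least[of a "\<lambda>i. psum p i > lam * psum p m"] a unfolding a'_def by auto
    hence up: "psum p a \<le> lam * psum p m" by simp
    have "lam * psum p m < (1+delta) * psum p a" using M[of a] a m a'1 by auto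
    hence "lam * psum p m / (1+delta) < psum p a" using dpos by (simp add: divide_less_eq mult.commute)
    moreover have "(1+lam)/2 * psum p m = lam * psum p m / (1+delta)"
      unfolding delta_def using assms(4) by (simp add: field_simps)
    ultimately have "(1+lam)/2 * psum p m \<le> psum p a" by (metis less_imp_le)
    thus "\<exists>a. (1+lam)/2 * psum p m \<le> psum p a \<and> psum p a \<le> lam * psum p m" using up by blast
  qed
qed

lemma dlimsup_lessD:
  assumes "dlimsup a < ereal e"
  shows "\<exists>N. \<forall>m n. N \<le> m \<longrightarrow> N \<le> n \<longrightarrow> a m n < ereal e"
proof -
  obtain N where N: "(SUP mn \<in> {mn. fst mn \<ge> N \<and> snd mn \<ge> N}. a (fst mn) (snd mn)) < ereal e"
    using assms unfolding dlimsup_def INF_less_iff by blast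
  show ?thesis
  proof (intro exI allI impI)
    fix m n assume "N \<le> m" "N \<le> n"
    hence "a m n \<le> (SUP mn \<in> {mn. fst mn \<ge> N \<and> snd mn \<ge> N}. a (fst mn) (snd mn))"
      by (intro SUP_upper2[of "(m,n)"]) auto
    thus "a m n < ereal e" using N by simp
  qed
qed

lemma osc_P:
  assumes "slow_osc_P p u" "e > 0"
  shows "\<exists>c>1. \<forall>lam. 1 < lam \<and> lam < c \<longrightarrow> (\<exists>N. \<forall>m n i. N \<le> m \<and> N \<le> n \<and> psum p m \<le> psum p i
           \<and> psum p i \<le> lam * psum p m \<longrightarrow> cmod (u i n - u m n) < e)"
proof -
  have "\<forall>\<^sub>F lam in at_right 1. dlimsup (\<lambda>m n. SUP i \<in> {i. psum p m \<le> psum p i \<and> psum p i \<le> lam * psum p m}.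
          ereal (cmod (u i n - u m n))) < ereal e"
    using assms unfolding slow_osc_P_def by (intro order_tendstoD(2)) auto
  then obtain c where c: "c > 1" and H: "\<And>lam. lam > 1 \<Longrightarrow> lam < c \<Longrightarrow> dlimsup (\<lambda>m n. SUP i \<in> {i. psum p m \<le> psum p i \<and> psum p i \<le> lam * psum p m}.
          ereal (cmod (u i n - u m n))) < ereal e"
    unfolding eventually_at_right_field by blast
  show ?thesis
  proof (intro exI[of _ c] conjI c allI impI)
    fix lam assume "1 < lam \<and> lam < c"
    from dlimsup_lessD[OF H] this obtain N where N: "\<And>m n. N \<le> m \<Longrightarrow> N \<le> n \<Longrightarrow>
       (SUP i \<in> {i. psum p m \<le> psum p i \<and> psum p i \<le> lam * psum p m}. ereal (cmod (u i n - u m n))) < ereal e"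
      by blast
    show "\<exists>N. \<forall>m n i. N \<le> m \<and> N \<le> n \<and> psum p m \<le> psum p i
           \<and> psum p i \<le> lam * psum p m \<longrightarrow> cmod (u i n - u m n) < e"
    proof (intro exI[of _ N] allI impI)
      fix m n i assume A: "N \<le> m \<and> N \<le> n \<and> psum p m \<le> psum p i \<and> psum p i \<le> lam * psum p m"
      hence "ereal (cmod (u i n - u m n)) \<le> (SUP i \<in> {i. psum p m \<le> psum p i \<and> psum p i \<le> lam * psum p m}. ereal (cmod (u i n - u m n)))"
        by (intro SUP_upper) auto
      hence "ereal (cmod (u i n - u m n)) < ereal e" using N[of m n] A by (meson order.strict_trans1)
      thus "cmod (u i n - u m n) < e" by simp
    qed
  qed
qed

lemma osc_Q:
  assumes "slow_osc_Q q u" "e > 0"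
  shows "\<exists>c>1. \<forall>kap. 1 < kap \<and> kap < c \<longrightarrow> (\<exists>N. \<forall>m n j. N \<le> m \<and> N \<le> n \<and> psum q n \<le> psum q j
           \<and> psum q j \<le> kap * psum q n \<longrightarrow> cmod (u m j - u m n) < e)"
proof -
  have "\<forall>\<^sub>F kap in at_right 1. dlimsup (\<lambda>m n. SUP j \<in> {j. psum q n \<le> psum q j \<and> psum q j \<le> kap * psum q n}.
          ereal (cmod (u m j - u m n))) < ereal e"
    using assms unfolding slow_osc_Q_def by (intro order_tendstoD(2)) auto
  then obtain c where c: "c > 1" and H: "\<And>kap. kap > 1 \<Longrightarrow> kap < c \<Longrightarrow> dlimsup (\<lambda>m n. SUP j \<in> {j. psum q n \<le> psum q j \<and> psum q j \<le> kap * psum q n}.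
          ereal (cmod (u m j - u m n))) < ereal e"
    unfolding eventually_at_right_field by blast
  show ?thesis
  proof (intro exI[of _ c] conjI c allI impI)
    fix kap assume "1 < kap \<and> kap < c"
    from dlimsup_lessD[OF H] this obtain N where N: "\<And>m n. N \<le> m \<Longrightarrow> N \<le> n \<Longrightarrow>
       (SUP j \<in> {j. psum q n \<le> psum q j \<and> psum q j \<le> kap * psum q n}. ereal (cmod (u m j - u m n))) < ereal e"
      by blast
    show "\<exists>N. \<forall>m n j. N \<le> m \<and> N \<le> n \<and> psum q n \<le> psum q j
           \<and> psum q j \<le> kap * psum q n \<longrightarrow> cmod (u m j - u m n) < e"
    proof (intro exI[of _ N] allI impI)
      fix m n j assume A: "N \<le> m \<and> N \<le> n \<and> psum q n \<le> psum q j \<and> psum q j \<le> kap * psum q n"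
      hence "ereal (cmod (u m j - u m n)) \<le> (SUP j \<in> {j. psum q n \<le> psum q j \<and> psum q j \<le> kap * psum q n}. ereal (cmod (u m j - u m n)))"
        by (intro SUP_upper) auto
      hence "ereal (cmod (u m j - u m n)) < ereal e" using N[of m n] A by (meson order.strict_trans1)
      thus "cmod (u m j - u m n) < e" by simp
    qed
  qed
qed


lemma osc_strong_gen:
  fixes F :: "nat \<Rightarrow> nat \<Rightarrow> nat \<Rightarrow> nat \<Rightarrow> real"
  assumes "((\<lambda>(lam, kap). dlimsup (\<lambda>m n. SUP ij \<in> {(i, j). psum p m \<le> psum p i \<and> psum p i \<le> lam * psum p m
            \<and> psum q n \<le> psum q j \<and> psum q j \<le> kap * psum q n}.
          ereal (F m n (fst ij) (snd ij)))) \<longlongrightarrow> 0) (at_right 1 \<times>\<^sub>F at_right 1)" "e > 0"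
  shows "\<exists>c1>1. \<exists>c2>1. \<forall>lam kap. 1 < lam \<and> lam < c1 \<and> 1 < kap \<and> kap < c2 \<longrightarrow>
     (\<exists>N. \<forall>m n i j. N \<le> m \<and> N \<le> n \<and> psum p m \<le> psum p i \<and> psum p i \<le> lam * psum p m
        \<and> psum q n \<le> psum q j \<and> psum q j \<le> kap * psum q n \<longrightarrow> F m n i j < e)"
proof -
  define G where "G = (\<lambda>lam kap. dlimsup (\<lambda>m n. SUP ij \<in> {(i, j). psum p m \<le> psum p i \<and> psum p i \<le> lam * psum p m
            \<and> psum q n \<le> psum q j \<and> psum q j \<le> kap * psum q n}.
          ereal (F m n (fst ij) (snd ij))))"
  have "\<forall>\<^sub>F x in at_right 1 \<times>\<^sub>F at_right 1. (case x of (lam, kap) \<Rightarrow> G lam kap) < ereal e"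
    using assms unfolding G_def by (intro order_tendstoD(2)) auto
  then obtain Pf Pg where PfPg: "eventually Pf (at_right (1::real))" "eventually Pg (at_right (1::real))"
    "\<And>x y. Pf x \<Longrightarrow> Pg y \<Longrightarrow> G x y < ereal e"
    unfolding eventually_prod_filter by fastforce
  obtain c1 where c1: "c1 > 1" "\<And>y. y > 1 \<Longrightarrow> y < c1 \<Longrightarrow> Pf y"
    using PfPg(1) unfolding eventually_at_right_field by blast
  obtain c2 where c2: "c2 > 1" "\<And>y. y > 1 \<Longrightarrow> y < c2 \<Longrightarrow> Pg y"
    using PfPg(2) unfolding eventually_at_right_field by blast
  show ?thesis
  proof (rule exI[of _ c1], rule conjI[OF c1(1)], rule exI[of _ c2], rule conjI[OF c2(1)], intro allI impI)
    fix lam kap assume lk: "1 < lam \<and> lam < c1 \<and> 1 < kap \<and> kap < c2"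
    hence "G lam kap < ereal e" using PfPg(3) c1 c2 by blast
    from dlimsup_lessD[OF this[unfolded G_def]] obtain N where N: "\<And>m n. N \<le> m \<Longrightarrow> N \<le> n \<Longrightarrow>
       (SUP ij \<in> {(i, j). psum p m \<le> psum p i \<and> psum p i \<le> lam * psum p m
            \<and> psum q n \<le> psum q j \<and> psum q j \<le> kap * psum q n}.
          ereal (F m n (fst ij) (snd ij))) < ereal e"
      by blast
    show "\<exists>N. \<forall>m n i j. N \<le> m \<and> N \<le> n \<and> psum p m \<le> psum p i \<and> psum p i \<le> lam * psum p m
        \<and> psum q n \<le> psum q j \<and> psum q j \<le> kap * psum q n \<longrightarrow> F m n i j < e"
    proof (rule exI[of _ N], intro allI impI)
      fix m n i j assume A: "N \<le> m \<and> N \<le> n \<and> psum p m \<le> psum p i \<and> psum p i \<le> lam * psum p m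
        \<and> psum q n \<le> psum q j \<and> psum q j \<le> kap * psum q n"
      hence "ereal (F m n i j) \<le> (SUP ij \<in> {(i, j). psum p m \<le> psum p i \<and> psum p i \<le> lam * psum p m
            \<and> psum q n \<le> psum q j \<and> psum q j \<le> kap * psum q n}.
          ereal (F m n (fst ij) (snd ij)))"
        by (intro SUP_upper2[of "(i,j)"]) auto
      hence "ereal (F m n i j) < ereal e" using N[of m n] A by (meson order.strict_trans1)
      thus "F m n i j < e" by simp
    qed
  qed
qed

lemma osc_P_strong:
  assumes "slow_osc_P_strong p q u" "e > 0"
  shows "\<exists>c1>1. \<exists>c2>1. \<forall>lam kap. 1 < lam \<and> lam < c1 \<and> 1 < kap \<and> kap < c2 \<longrightarrow>
     (\<exists>N. \<forall>m n i j. N \<le> m \<and> N \<le> n \<and> psum p m \<le> psum p i \<and> psum p i \<le> lam * psum p m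
        \<and> psum q n \<le> psum q j \<and> psum q j \<le> kap * psum q n \<longrightarrow> cmod (u i j - u m j) < e)"
  using osc_strong_gen[where p=p and q=q and F="\<lambda>m n i j. cmod (u i j - u m j)" and e=e] assms
  unfolding slow_osc_P_strong_def by simp

lemma osc_Q_strong:
  assumes "slow_osc_Q_strong p q u" "e > 0"
  shows "\<exists>c1>1. \<exists>c2>1. \<forall>lam kap. 1 < lam \<and> lam < c1 \<and> 1 < kap \<and> kap < c2 \<longrightarrow>
     (\<exists>N. \<forall>m n i j. N \<le> m \<and> N \<le> n \<and> psum p m \<le> psum p i \<and> psum p i \<le> lam * psum p m
        \<and> psum q n \<le> psum q j \<and> psum q j \<le> kap * psum q n \<longrightarrow> cmod (u i j - u i n) < e)"
  using osc_strong_gen[where p=p and q=q and F="\<lambda>m n i j. cmod (u i j - u i n)" and e=e] assms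
  unfolding slow_osc_Q_strong_def by simp


lemma sum_split_atMost: "(m::nat) \<le> a \<Longrightarrow> sum f {..a} = sum f {..m} + sum f {m<..a}"
proof -
  assume "m \<le> a"
  hence "{..a} = {..m} \<union> {m<..a}" by auto
  moreover have "{..m} \<inter> {m<..a} = {}" by auto
  ultimately show ?thesis by (simp add: sum.union_disjoint)
qed

lemma core:
  fixes p q :: "nat \<Rightarrow> real" and u :: "nat \<Rightarrow> nat \<Rightarrow> complex" and l :: complex
  assumes pos: "\<forall>i. p i > 0" "\<forall>j. q j > 0" and ma: "m \<le> a" and nb: "n \<le> b"
  and H: "\<And>i j. i \<in> {m<..a} \<Longrightarrow> j \<in> {n<..b} \<Longrightarrow> cmod (u m n - u i j) \<le> E"
  and S: "\<And>x y. x \<in> {m,a} \<Longrightarrow> y \<in> {n,b} \<Longrightarrow> cmod (wmean p q u x y - l) \<le> eta"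
  shows "(psum p a - psum p m)*(psum q b - psum q n)*cmod (u m n - l)
     \<le> (psum p a - psum p m)*(psum q b - psum q n)*E + 4*(psum p a*psum q b)*eta"
proof -
  define s where "s x y = (\<Sum>i\<le>x. \<Sum>j\<le>y. complex_of_real (p i * q j) * u i j)" for x y
  define w where "w = wmean p q u"
  have Ppos: "psum p x > 0" for x by (rule psum_pos[OF pos(1)])
  have Qpos: "psum q x > 0" for x by (rule psum_pos[OF pos(2)])
  have s_eq: "s x y = complex_of_real (psum p x * psum q y) * w x y" for x y
    using Ppos[of x] Qpos[of y] unfolding s_def w_def wmean_def by simp
  define D where "D = (psum p a - psum p m)*(psum q b - psum q n)"
  define T where "T = (\<Sum>i\<in>{m<..a}. \<Sum>j\<in>{n<..b}. complex_of_real (p i * q j) * (u m n - u i j))"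
  have inner: "(\<Sum>j\<in>{n<..b}. g j) = (\<Sum>j\<le>b. g j) - (\<Sum>j\<le>n. g j)" for g :: "nat \<Rightarrow> complex"
    using sum_split_atMost[OF nb, of g] by simp
  have outer: "(\<Sum>i\<in>{m<..a}. g i) = (\<Sum>i\<le>a. g i) - (\<Sum>i\<le>m. g i)" for g :: "nat \<Rightarrow> complex"
    using sum_split_atMost[OF ma, of g] by simp
  have R: "(\<Sum>i\<in>{m<..a}. \<Sum>j\<in>{n<..b}. complex_of_real (p i * q j) * u i j) = s a b - s m b - s a n + s m n"
  proof -
    have "(\<Sum>i\<in>{m<..a}. \<Sum>j\<in>{n<..b}. complex_of_real (p i * q j) * u i j)
       = (\<Sum>i\<in>{m<..a}. (\<Sum>j\<le>b. complex_of_real (p i * q j) * u i j) - (\<Sum>j\<le>n. complex_of_real (p i * q j) * u i j))"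
      by (simp add: inner)
    also have "\<dots> = (\<Sum>i\<in>{m<..a}. (\<Sum>j\<le>b. complex_of_real (p i * q j) * u i j)) - (\<Sum>i\<in>{m<..a}. (\<Sum>j\<le>n. complex_of_real (p i * q j) * u i j))"
      by (simp add: sum_subtractf)
    also have "\<dots> = (s a b - s m b) - (s a n - s m n)" by (simp add: outer s_def)
    finally show ?thesis by simp
  qed
  have psplit: "(\<Sum>i\<in>{m<..a}. p i) = psum p a - psum p m"
    using sum_split_atMost[OF ma, of p] unfolding psum_def by simp
  have qsplit: "(\<Sum>j\<in>{n<..b}. q j) = psum q b - psum q n"
    using sum_split_atMost[OF nb, of q] unfolding psum_def by simp
  have Dsum: "(\<Sum>i\<in>{m<..a}. \<Sum>j\<in>{n<..b}. p i * q j) = D"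
    unfolding D_def psplit[symmetric] qsplit[symmetric] by (simp add: sum_product)
  have T_eq: "T = complex_of_real D * u m n - (s a b - s m b - s a n + s m n)"
  proof -
    have "T = (\<Sum>i\<in>{m<..a}. \<Sum>j\<in>{n<..b}. complex_of_real (p i * q j) * u m n - complex_of_real (p i * q j) * u i j)"
      unfolding T_def by (simp add: algebra_simps)
    also have "\<dots> = (\<Sum>i\<in>{m<..a}. \<Sum>j\<in>{n<..b}. complex_of_real (p i * q j)) * u m n
        - (\<Sum>i\<in>{m<..a}. \<Sum>j\<in>{n<..b}. complex_of_real (p i * q j) * u i j)"
      by (simp add: sum_subtractf sum_distrib_right)
    also have "(\<Sum>i\<in>{m<..a}. \<Sum>j\<in>{n<..b}. complex_of_real (p i * q j)) = complex_of_real D"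
      unfolding Dsum[symmetric] by simp
    finally show ?thesis using R by simp
  qed
  define C where "C = complex_of_real (psum p a * psum q b) * (w a b - l) - complex_of_real (psum p m * psum q b) * (w m b - l)
      - complex_of_real (psum p a * psum q n) * (w a n - l) + complex_of_real (psum p m * psum q n) * (w m n - l)"
  have main: "complex_of_real D * (u m n - l) = T + C"
    unfolding T_eq C_def s_eq D_def by (simp add: algebra_simps)
  have Tb: "cmod T \<le> D * E"
  proof -
    have "cmod T \<le> (\<Sum>i\<in>{m<..a}. cmod (\<Sum>j\<in>{n<..b}. complex_of_real (p i * q j) * (u m n - u i j)))"
      unfolding T_def by (rule norm_sum)
    also have "\<dots> \<le> (\<Sum>i\<in>{m<..a}. \<Sum>j\<in>{n<..b}. cmod (complex_of_real (p i * q j) * (u m n - u i j)))"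
      by (intro sum_mono norm_sum)
    also have "\<dots> \<le> (\<Sum>i\<in>{m<..a}. \<Sum>j\<in>{n<..b}. p i * q j * E)"
    proof (intro sum_mono)
      fix i j assume "i \<in> {m<..a}" "j \<in> {n<..b}"
      hence "cmod (u m n - u i j) \<le> E" by (rule H)
      moreover have "p i * q j > 0" using pos by simp
      moreover have "cmod (complex_of_real (p i * q j) * (u m n - u i j)) = p i * q j * cmod (u m n - u i j)"
        using pos by (simp add: norm_mult abs_mult abs_of_pos less_imp_le)
      ultimately show "cmod (complex_of_real (p i * q j) * (u m n - u i j)) \<le> p i * q j * E"
        by (simp add: mult_left_mono)
    qed
    also have "\<dots> = D * E" unfolding Dsum[symmetric] by (simp add: sum_distrib_right)
    finally show ?thesis .
  qed
  have eta0: "eta \<ge> 0" using S[of m n] by (meson insertI1 norm_ge_zero order_trans)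
  have Pma: "psum p m \<le> psum p a" by (rule psum_mono[OF pos(1) ma])
  have Qnb: "psum q n \<le> psum q b" by (rule psum_mono[OF pos(2) nb])
  have Cb: "cmod C \<le> 4 * (psum p a * psum q b) * eta"
  proof -
    have nb1: "cmod (complex_of_real (psum p x * psum q y) * (w x y - l)) \<le> psum p a * psum q b * eta"
      if "x \<in> {m,a}" "y \<in> {n,b}" for x y
    proof -
      have "psum p x \<le> psum p a" "psum q y \<le> psum q b" using that Pma Qnb by auto
      hence "psum p x * psum q y \<le> psum p a * psum q b"
        using Ppos[of x] Qpos[of y] by (intro mult_mono) auto
      moreover have "cmod (w x y - l) \<le> eta" using S[OF that] unfolding w_def .
      ultimately have "psum p x * psum q y * cmod (w x y - l) \<le> psum p a * psum q b * eta"
        using Ppos[of x] Qpos[of y] Ppos[of a] Qpos[of b] eta0 by (intro mult_mono[of "psum p x * psum q y"]) auto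
      thus ?thesis using Ppos[of x] Qpos[of y] by (simp add: norm_mult abs_mult)
    qed
    have "cmod C \<le> cmod (complex_of_real (psum p a * psum q b) * (w a b - l)) + cmod (complex_of_real (psum p m * psum q b) * (w m b - l))
      + cmod (complex_of_real (psum p a * psum q n) * (w a n - l)) + cmod (complex_of_real (psum p m * psum q n) * (w m n - l))"
      unfolding C_def by (intro order_trans[OF norm_triangle_ineq] add_mono order_trans[OF norm_triangle_ineq4] order_refl)
    also have "\<dots> \<le> 4 * (psum p a * psum q b) * eta"
      using nb1[of a b] nb1[of m b] nb1[of a n] nb1[of m n] by simp
    finally show ?thesis .
  qed
  have D0: "D \<ge> 0" unfolding D_def using Pma Qnb by simp
  have "D * cmod (u m n - l) = cmod (complex_of_real D * (u m n - l))" using D0 by (simp add: norm_mult)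
  also have "\<dots> \<le> cmod T + cmod C" unfolding main by (rule norm_triangle_ineq)
  also have "\<dots> \<le> D * E + 4 * (psum p a * psum q b) * eta" using Tb Cb by simp
  finally show ?thesis unfolding D_def .
qed


lemma comb:
  assumes "slow_osc_P p u" "slow_osc_Q q u" "slow_osc_P_strong p q u \<or> slow_osc_Q_strong p q u" "ep > 0"
  shows "\<exists>lam kap N. lam > 1 \<and> kap > 1 \<and> (\<forall>m n i j. N \<le> m \<and> N \<le> n \<and> psum p m \<le> psum p i \<and> psum p i \<le> lam * psum p m
        \<and> psum q n \<le> psum q j \<and> psum q j \<le> kap * psum q n \<longrightarrow> cmod (u m n - u i j) \<le> 2*ep)"
  using assms(3)
proof
  assume st: "slow_osc_P_strong p q u"
  obtain c1 c2 where c: "c1 > 1" "c2 > 1" and Hs: "\<And>lam kap. 1 < lam \<and> lam < c1 \<and> 1 < kap \<and> kap < c2 \<Longrightarrow>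
     (\<exists>N. \<forall>m n i j. N \<le> m \<and> N \<le> n \<and> psum p m \<le> psum p i \<and> psum p i \<le> lam * psum p m
        \<and> psum q n \<le> psum q j \<and> psum q j \<le> kap * psum q n \<longrightarrow> cmod (u i j - u m j) < ep)"
    using osc_P_strong[OF st assms(4)] by blast
  obtain cQ where cQ: "cQ > 1" and HQ: "\<And>kap. 1 < kap \<and> kap < cQ \<Longrightarrow> (\<exists>N. \<forall>m n j. N \<le> m \<and> N \<le> n \<and> psum q n \<le> psum q j
           \<and> psum q j \<le> kap * psum q n \<longrightarrow> cmod (u m j - u m n) < ep)"
    using osc_Q[OF assms(2,4)] by blast
  define lam where "lam = (1+c1)/2"
  define kap where "kap = (1 + min c2 cQ)/2"
  have lk: "1 < lam \<and> lam < c1 \<and> 1 < kap \<and> kap < c2" "1 < kap \<and> kap < cQ"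
    using c cQ by (auto simp: lam_def kap_def)
  obtain N1 where N1: "\<forall>m n i j. N1 \<le> m \<and> N1 \<le> n \<and> psum p m \<le> psum p i \<and> psum p i \<le> lam * psum p m
        \<and> psum q n \<le> psum q j \<and> psum q j \<le> kap * psum q n \<longrightarrow> cmod (u i j - u m j) < ep"
    using Hs[OF lk(1)] by blast
  obtain N2 where N2: "\<forall>m n j. N2 \<le> m \<and> N2 \<le> n \<and> psum q n \<le> psum q j
           \<and> psum q j \<le> kap * psum q n \<longrightarrow> cmod (u m j - u m n) < ep"
    using HQ[OF lk(2)] by blast
  show ?thesis
  proof (rule exI[of _ lam], rule exI[of _ kap], rule exI[of _ "max N1 N2"], intro conjI allI impI)
    show "lam > 1" "kap > 1" using lk by auto
    fix m n i j assume A: "max N1 N2 \<le> m \<and> max N1 N2 \<le> n \<and> psum p m \<le> psum p i \<and> psum p i \<le> lam * psum p m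
        \<and> psum q n \<le> psum q j \<and> psum q j \<le> kap * psum q n"
    have "u m n - u i j = - ((u i j - u m j) + (u m j - u m n))" by simp
    hence "cmod (u m n - u i j) \<le> cmod (u i j - u m j) + cmod (u m j - u m n)"
      by (metis norm_minus_cancel norm_triangle_ineq)
    also have "\<dots> \<le> 2*ep" using N1[rule_format, of m n i j] N2[rule_format, of m n j] A by auto
    finally show "cmod (u m n - u i j) \<le> 2*ep" .
  qed
next
  assume st: "slow_osc_Q_strong p q u"
  obtain c1 c2 where c: "c1 > 1" "c2 > 1" and Hs: "\<And>lam kap. 1 < lam \<and> lam < c1 \<and> 1 < kap \<and> kap < c2 \<Longrightarrow>
     (\<exists>N. \<forall>m n i j. N \<le> m \<and> N \<le> n \<and> psum p m \<le> psum p i \<and> psum p i \<le> lam * psum p m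
        \<and> psum q n \<le> psum q j \<and> psum q j \<le> kap * psum q n \<longrightarrow> cmod (u i j - u i n) < ep)"
    using osc_Q_strong[OF st assms(4)] by blast
  obtain cP where cP: "cP > 1" and HP: "\<And>lam. 1 < lam \<and> lam < cP \<Longrightarrow> (\<exists>N. \<forall>m n i. N \<le> m \<and> N \<le> n \<and> psum p m \<le> psum p i
           \<and> psum p i \<le> lam * psum p m \<longrightarrow> cmod (u i n - u m n) < ep)"
    using osc_P[OF assms(1,4)] by blast
  define lam where "lam = (1 + min c1 cP)/2"
  define kap where "kap = (1+c2)/2"
  have lk: "1 < lam \<and> lam < c1 \<and> 1 < kap \<and> kap < c2" "1 < lam \<and> lam < cP"
    using c cP by (auto simp: lam_def kap_def)
  obtain N1 where N1: "\<forall>m n i j. N1 \<le> m \<and> N1 \<le> n \<and> psum p m \<le> psum p i \<and> psum p i \<le> lam * psum p m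
        \<and> psum q n \<le> psum q j \<and> psum q j \<le> kap * psum q n \<longrightarrow> cmod (u i j - u i n) < ep"
    using Hs[OF lk(1)] by blast
  obtain N2 where N2: "\<forall>m n i. N2 \<le> m \<and> N2 \<le> n \<and> psum p m \<le> psum p i
           \<and> psum p i \<le> lam * psum p m \<longrightarrow> cmod (u i n - u m n) < ep"
    using HP[OF lk(2)] by blast
  show ?thesis
  proof (rule exI[of _ lam], rule exI[of _ kap], rule exI[of _ "max N1 N2"], intro conjI allI impI)
    show "lam > 1" "kap > 1" using lk by auto
    fix m n i j assume A: "max N1 N2 \<le> m \<and> max N1 N2 \<le> n \<and> psum p m \<le> psum p i \<and> psum p i \<le> lam * psum p m
        \<and> psum q n \<le> psum q j \<and> psum q j \<le> kap * psum q n"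
    have "u m n - u i j = - ((u i j - u i n) + (u i n - u m n))" by simp
    hence "cmod (u m n - u i j) \<le> cmod (u i j - u i n) + cmod (u i n - u m n)"
      by (metis norm_minus_cancel norm_triangle_ineq)
    also have "\<dots> \<le> 2*ep" using N1[rule_format, of m n i j] N2[rule_format, of m n i] A by auto
    finally show "cmod (u m n - u i j) \<le> 2*ep" .
  qed
qed

lemma Pa_bound:
  fixes lam Pm Pa :: real
  assumes "lam > 1" "(1+lam)/2 * Pm \<le> Pa" "Pa \<le> lam * Pm" "Pm > 0"
  shows "Pa \<le> (2*lam/(lam-1)) * (Pa - Pm)"
proof -
  have "(1+lam)/2*Pm = Pm + (lam-1)/2*Pm" by (simp add: field_simps)
  hence "(lam-1)/2*Pm \<le> Pa - Pm" using assms(2) by linarith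
  hence "(2*lam/(lam-1)) * ((lam-1)/2*Pm) \<le> (2*lam/(lam-1)) * (Pa - Pm)"
    using assms(1) by (intro mult_left_mono) auto
  moreover have "(2*lam/(lam-1)) * ((lam-1)/2*Pm) = lam * Pm" using assms(1) by (simp add: field_simps)
  ultimately show ?thesis using assms(3) by linarith
qed

theorem theorem5p1:
  fixes p q :: "nat \<Rightarrow> real" and u :: "nat \<Rightarrow> nat \<Rightarrow> complex" and l :: complex and alpha :: real
  assumes "alpha \<ge> 0"
    and "p \<in> SVA_reg alpha" and "q \<in> SVA_reg alpha"
    and "filterlim (psum p) at_top sequentially" and "filterlim (psum q) at_top sequentially"
    and "Nbar_summable p q u l"
    and "slow_osc_P p u" and "slow_osc_Q q u"
    and "slow_osc_P_strong p q u \<or> slow_osc_Q_strong p q u"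
  shows "P_conv u l"
  unfolding P_conv_def
proof (intro allI impI)
  fix e :: real assume e: "e > 0"
  have posp: "\<forall>i. p i > 0" using assms(2) unfolding SVA_reg_def by auto
  have posq: "\<forall>i. q i > 0" using assms(3) unfolding SVA_reg_def by auto
  have "\<exists>lam kap N. lam > 1 \<and> kap > 1 \<and> (\<forall>m n i j. N \<le> m \<and> N \<le> n \<and> psum p m \<le> psum p i \<and> psum p i \<le> lam * psum p m
        \<and> psum q n \<le> psum q j \<and> psum q j \<le> kap * psum q n \<longrightarrow> cmod (u m n - u i j) \<le> 2*(e/8))"
    using comb[OF assms(7,8,9), of "e/8"] e by simp
  then obtain lam kap N where lk: "lam > 1" "kap > 1" and HN0: "\<forall>m n i j. N \<le> m \<and> N \<le> n \<and> psum p m \<le> psum p i \<and> psum p i \<le> lam * psum p m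
        \<and> psum q n \<le> psum q j \<and> psum q j \<le> kap * psum q n \<longrightarrow> cmod (u m n - u i j) \<le> 2*(e/8)"
    by blast
  note HN = HN0[rule_format]
  define kl where "kl = 2*lam/(lam-1)"
  define kk where "kk = 2*kap/(kap-1)"
  have klp: "kl > 0" "kk > 0" using lk by (auto simp: kl_def kk_def)
  define eta where "eta = e / (16 * (kl*kk))"
  have eta: "eta > 0" using e klp by (simp add: eta_def)
  obtain N3 where N3: "\<And>x y. x \<ge> N3 \<Longrightarrow> y \<ge> N3 \<Longrightarrow> cmod (wmean p q u x y - l) < eta"
    using assms(6) eta unfolding Nbar_summable_def P_conv_def by blast
  obtain M1 where M1: "\<And>m. m \<ge> M1 \<Longrightarrow> \<exists>a. (1+lam)/2 * psum p m \<le> psum p a \<and> psum p a \<le> lam * psum p m"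
    using block[OF assms(2,1,4) lk(1)] by blast
  obtain M2 where M2: "\<And>m. m \<ge> M2 \<Longrightarrow> \<exists>a. (1+kap)/2 * psum q m \<le> psum q a \<and> psum q a \<le> kap * psum q m"
    using block[OF assms(3,1,5) lk(2)] by blast
  show "\<exists>n0. \<forall>m n. n0 \<le> m \<and> n0 \<le> n \<longrightarrow> cmod (u m n - l) < e"
  proof (rule exI[of _ "max N (max N3 (max M1 M2))"], intro allI impI)
    fix m n assume mn: "max N (max N3 (max M1 M2)) \<le> m \<and> max N (max N3 (max M1 M2)) \<le> n"
    obtain a where a: "(1+lam)/2 * psum p m \<le> psum p a" "psum p a \<le> lam * psum p m" using M1[of m] mn by auto
    obtain b where b: "(1+kap)/2 * psum q n \<le> psum q b" "psum q b \<le> kap * psum q n" using M2[of n] mn by auto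
    have Pm: "psum p m > 0" "psum q n > 0" using psum_pos posp posq by auto
    have "(1+lam)/2*psum p m = psum p m + (lam-1)/2*psum p m" "(1+kap)/2*psum q n = psum q n + (kap-1)/2*psum q n" by (simp_all add: field_simps)
    moreover have "(lam-1)/2*psum p m > 0" "(kap-1)/2*psum q n > 0" using lk Pm by simp_all
    ultimately have "psum p m < psum p a" "psum q n < psum q b" using a(1) b(1) by linarith+
    have ma: "m < a" by (rule psum_less_imp[OF posp \<open>psum p m < psum p a\<close>])
    from \<open>psum q n < psum q b\<close> have nb: "n < b" by (rule psum_less_imp[OF posq])
    have core_app: "(psum p a - psum p m)*(psum q b - psum q n)*cmod (u m n - l)
     \<le> (psum p a - psum p m)*(psum q b - psum q n)*(2*(e/8)) + 4*(psum p a*psum q b)*eta"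
    proof (rule core[OF posp posq])
      show "m \<le> a" "n \<le> b" using ma nb by auto
      fix i j assume ij: "i \<in> {m<..a}" "j \<in> {n<..b}"
      have "psum p m \<le> psum p i" "psum p i \<le> psum p a" "psum q n \<le> psum q j" "psum q j \<le> psum q b"
        using ij by (auto intro!: psum_mono[OF posp] psum_mono[OF posq])
      thus "cmod (u m n - u i j) \<le> 2*(e/8)" using HN[of m n i j] mn a b by auto
    next
      fix x y assume "x \<in> {m,a}" "y \<in> {n,b}"
      thus "cmod (wmean p q u x y - l) \<le> eta" using N3[of x y] mn ma nb
        by (auto intro: less_imp_le)
    qed
    define A1 where "A1 = psum p a - psum p m"
    define B1 where "B1 = psum q b - psum q n"
    have A1p: "A1 > 0" "B1 > 0" using \<open>psum p m < psum p a\<close> \<open>psum q n < psum q b\<close> by (auto simp: A1_def B1_def)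
    have "psum p a \<le> kl * A1" unfolding kl_def A1_def by (rule Pa_bound[OF lk(1) a Pm(1)])
    moreover have "psum q b \<le> kk * B1" unfolding kk_def B1_def by (rule Pa_bound[OF lk(2) b Pm(2)])
    ultimately have "psum p a * psum q b \<le> (kl*A1) * (kk*B1)"
      using psum_pos[OF posp, of a] psum_pos[OF posq, of b] by (intro mult_mono) auto
    hence "4*(psum p a*psum q b)*eta \<le> 4*((kl*A1) * (kk*B1))*eta" using eta by simp
    also have "\<dots> = (A1*B1) * (e/4)" using klp by (simp add: eta_def field_simps)
    finally have "(A1*B1)*cmod (u m n - l) \<le> (A1*B1)*(e/4) + (A1*B1) * (e/4)"
      using core_app unfolding A1_def[symmetric] B1_def[symmetric] by simp
    hence "(A1*B1)*cmod (u m n - l) \<le> (A1*B1)*(e/2)" by (simp add: algebra_simps)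
    hence "cmod (u m n - l) \<le> e/2" using A1p by (simp add: mult_le_cancel_left_pos)
    thus "cmod (u m n - l) < e" using e by linarith
  qed
qed

end
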